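(* A collection $(p^{(n)}_k)^{n\geq1}_{k\leq n}$ where $p^{(n)}_k$ is a non-negative, symmetric function on $\{(n_1,\dots,n_k):\,\sum_{j=1}^k n_j=n\}$, is an EPerPF if and only if it satisfies $$p^{(1)}(1)=1,\qquad p^{(n)}_{k(\pi)}(\mathrm{c}(\pi))=\sum_{\sigma\in\mathcal{A}(\pi)}p_{k(\sigma)}^{(n+1)}(\mathrm{c}(\sigma))\quad\text{for any }\pi\in\mathcal S_n.$$
   Context: $\mathcal S_n$ is the symmetric group on $[n]$. For $\pi\in\mathcal S_n$, $k(\pi)$ is its number of cycles and $\mathrm{c}(\pi)=(c_1(\pi),\dots,c_{k(\pi)}(\pi))$ its vector of cycle lengths (cycles written starting from their least element and ordered by first elements). The deletion map $\operatorname{del}:\mathcal S_{n+1}\to\mathcal S_n$ is $\operatorname{del}(\sigma)(i)=\sigma(i)$ if $i\neq\sigma^{-1}(n+1)$ and $\operatorname{del}(\sigma)(i)=\sigma(n+1)$ if $i=\sigma^{-1}(n+1)$ (it deletes $n+1$ from the cycle representation), and $\mathcal A(\pi)=\{\sigma\in\mathcal S_{n+1}:\operatorname{del}(\sigma)=\pi\}$ (so $|\mathcal A(\pi)|=n+1$). A random permutation is finitely exchangeable if permutations with equal cycle type have equal probability; it is exchangeable if its law is the $n$-th element of a sequence of laws of finitely exchangeable random permutations $\boldsymbol\pi_m\in\mathcal S_m$ that is consistent in the sense $\operatorname{del}(\boldsymbol\pi_{m+1})\overset{d}{=}\boldsymbol\pi_m$. Such laws are exactly those with pmf $p(\pi)=\varphi^{(n)}_k(n_1,\dots,n_k)/\prod_{j=1}^k(n_j-1)!$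 for an EPPF $(\varphi^{(n)})$ and cycle lengths $(n_1,\dots,n_k)$ of $\pi$. An EPerPF (exchangeable permutation probability function) is the sequence $(p^{(n)})_{n\geq1}$ of functions of this form determining such a consistent sequence of laws of exchangeable random permutations. *)

theory Defs
  imports "HOL-Probability.Probability" "HOL-Combinatorics.Permutations"
begin

text \<open>Permutations of [n] are functions nat => nat that permute {1..n}.\<close>

definition cycle_of :: "(nat \<Rightarrow> nat) \<Rightarrow> nat \<Rightarrow> nat set" where
  "cycle_of \<pi> i = {(\<pi> ^^ m) i | m. True}"

definition cyc :: "nat \<Rightarrow> (nat \<Rightarrow> nat) \<Rightarrow> nat list" where
  "cyc n \<pi> = map (\<lambda>i. card (cycle_of \<pi> i))
      (sorted_list_of_set {i \<in> {1..n}. i = Min (cycle_of \<pi> i)})"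

definition ncyc :: "nat \<Rightarrow> (nat \<Rightarrow> nat) \<Rightarrow> nat" where
  "ncyc n \<pi> = length (cyc n \<pi>)"

definition del :: "nat \<Rightarrow> (nat \<Rightarrow> nat) \<Rightarrow> (nat \<Rightarrow> nat)" where
  "del n \<sigma> i = (if i \<in> {1..n} then (if \<sigma> i = Suc n then \<sigma> (Suc n) else \<sigma> i) else i)"

definition A :: "nat \<Rightarrow> (nat \<Rightarrow> nat) \<Rightarrow> (nat \<Rightarrow> nat) set" where
  "A n \<pi> = {\<sigma>. \<sigma> permutes {1..Suc n} \<and> del n \<sigma> = \<pi>}"

definition composition :: "nat \<Rightarrow> nat list \<Rightarrow> bool" where
  "composition n xs \<longleftrightarrow> (\<forall>x\<in>set xs. 0 < x) \<and> sum_list xs = n"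

definition fin_exchangeable :: "nat \<Rightarrow> (nat \<Rightarrow> nat) pmf \<Rightarrow> bool" where
  "fin_exchangeable n P \<longleftrightarrow> set_pmf P \<subseteq> {\<pi>. \<pi> permutes {1..n}} \<and>
     (\<forall>\<pi> \<tau>. \<pi> permutes {1..n} \<longrightarrow> \<tau> permutes {1..n} \<longrightarrow>
        mset (cyc n \<pi>) = mset (cyc n \<tau>) \<longrightarrow> pmf P \<pi> = pmf P \<tau>)"

text \<open>p n xs stands for p^{(n)}_{length xs}(xs). p is an EPerPF if it is the
  pmf (through cycle lengths) of a consistent sequence of finitely exchangeable
  random permutations.\<close>
definition EPerPF :: "(nat \<Rightarrow> nat list \<Rightarrow> real) \<Rightarrow> bool" where
  "EPerPF p \<longleftrightarrow> (\<exists>P :: nat \<Rightarrow> (nat \<Rightarrow> nat) pmf.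
     (\<forall>n\<ge>1. fin_exchangeable n (P n)) \<and>
     (\<forall>n\<ge>1. map_pmf (del n) (P (Suc n)) = P n) \<and>
     (\<forall>n\<ge>1. \<forall>\<pi>. \<pi> permutes {1..n} \<longrightarrow> pmf (P n) \<pi> = p n (cyc n \<pi>)))"

end

theory Submission
  imports Defs "HOL-Combinatorics.Orbits"
begin

lemma cycle_of_orbit:
  assumes "\<pi> permutes {1..n}"
  shows "cycle_of \<pi> i = orbit \<pi> i"
proof -
  have "permutation \<pi>" using permutes_imp_permutation[OF _ assms] by simp
  then show ?thesis unfolding cycle_of_def by (simp add: orbit_altdef_permutation)
qed

lemma cycle_of_self:
  assumes "\<pi> permutes {1..n}"
  shows "i \<in> cycle_of \<pi> i"
  unfolding cycle_of_def by (auto intro: exI[where x=0])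

lemma cycle_of_subset:
  assumes "\<pi> permutes {1..n}" "i \<in> {1..n}"
  shows "cycle_of \<pi> i \<subseteq> {1..n}"
proof
  fix x assume "x \<in> cycle_of \<pi> i"
  then obtain m where "x = (\<pi> ^^ m) i" unfolding cycle_of_def by auto
  moreover have "(\<pi> ^^ m) i \<in> {1..n}" for m
  proof (induct m)
    case 0
    then show ?case using assms(2) by simp
  next
    case (Suc m)
    then show ?case using permutes_in_image[OF assms(1)] by (metis funpow.simps(2) comp_apply)
  qed
  ultimately show "x \<in> {1..n}" by simp
qed

lemma cycle_of_eq:
  assumes "\<pi> permutes {1..n}" "j \<in> cycle_of \<pi> i"
  shows "cycle_of \<pi> j = cycle_of \<pi> i"
proof -
  have p: "permutation \<pi>" using permutes_imp_permutation[OF _ assms(1)] by simp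
  have j: "j \<in> orbit \<pi> i" using assms cycle_of_orbit by metis
  have ii: "i \<in> orbit \<pi> i" by (rule permutation_self_in_orbit[OF p])
  have "orbit \<pi> j \<subseteq> orbit \<pi> i"
  proof
    fix x assume "x \<in> orbit \<pi> j" then show "x \<in> orbit \<pi> i" by (rule orbit_trans[OF _ j])
  qed
  moreover have "i \<in> orbit \<pi> j" using orbit_swap[OF ii j] .
  then have "orbit \<pi> i \<subseteq> orbit \<pi> j"
  proof -
    assume ij: "i \<in> orbit \<pi> j"
    show ?thesis
    proof
      fix x assume "x \<in> orbit \<pi> i" then show "x \<in> orbit \<pi> j" by (rule orbit_trans[OF _ ij])
    qed
  qed
  ultimately show ?thesis using cycle_of_orbit[OF assms(1)] by auto
qed

lemma cyc_composition:
  assumes "\<pi> permutes {1..n}"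
  shows "composition n (cyc n \<pi>)"
proof -
  define R where "R = {i \<in> {1..n}. i = Min (cycle_of \<pi> i)}"
  have fR: "finite R" unfolding R_def by auto
  have fin: "finite (cycle_of \<pi> i)" if "i \<in> {1..n}" for i
    using cycle_of_subset[OF assms that] finite_subset by blast
  have pos: "\<forall>x\<in>set (cyc n \<pi>). 0 < x"
    unfolding cyc_def using fR fin cycle_of_self[OF assms] R_def[symmetric]
    by (auto simp: R_def card_gt_0_iff)
  have "sum_list (cyc n \<pi>) = (\<Sum>i\<in>R. card (cycle_of \<pi> i))"
    unfolding cyc_def R_def[symmetric]
    using sum.distinct_set_conv_list[of "sorted_list_of_set R" "\<lambda>i. card (cycle_of \<pi> i)"] fR
    by simp
  also have "\<dots> = card (\<Union>i\<in>R. cycle_of \<pi> i)"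
  proof (rule card_UN_disjoint[symmetric, OF fR])
    show "\<forall>i\<in>R. finite (cycle_of \<pi> i)" using fin R_def by auto
    show "\<forall>i\<in>R. \<forall>j\<in>R. i \<noteq> j \<longrightarrow> cycle_of \<pi> i \<inter> cycle_of \<pi> j = {}"
    proof (intro ballI impI)
      fix i j assume ij: "i \<in> R" "j \<in> R" "i \<noteq> j"
      show "cycle_of \<pi> i \<inter> cycle_of \<pi> j = {}"
      proof (rule ccontr)
        assume "cycle_of \<pi> i \<inter> cycle_of \<pi> j \<noteq> {}"
        then obtain x where "x \<in> cycle_of \<pi> i" "x \<in> cycle_of \<pi> j" by auto
        then have "cycle_of \<pi> i = cycle_of \<pi> j" using cycle_of_eq[OF assms] by metis
        then show False using ij unfolding R_def by auto
      qed
    qed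
  qed
  also have "(\<Union>i\<in>R. cycle_of \<pi> i) = {1..n}"
  proof
    show "(\<Union>i\<in>R. cycle_of \<pi> i) \<subseteq> {1..n}" using cycle_of_subset[OF assms] R_def by auto
    show "{1..n} \<subseteq> (\<Union>i\<in>R. cycle_of \<pi> i)"
    proof
      fix j assume j: "j \<in> {1..n}"
      define i where "i = Min (cycle_of \<pi> j)"
      have "i \<in> cycle_of \<pi> j" unfolding i_def using fin[OF j] cycle_of_self[OF assms]
        by (intro Min_in) auto
      then have e: "cycle_of \<pi> i = cycle_of \<pi> j" using cycle_of_eq[OF assms] by metis
      have "i \<in> {1..n}" using \<open>i \<in> cycle_of \<pi> j\<close> cycle_of_subset[OF assms j] by auto
      then have "i \<in> R" unfolding R_def using e i_def by auto
      then show "j \<in> (\<Union>i\<in>R. cycle_of \<pi> i)" using e cycle_of_self[OF assms, of j] by auto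
    qed
  qed
  finally show ?thesis using pos unfolding composition_def by simp
qed

lemma del_permutes:
  assumes "\<sigma> permutes {1..Suc n}"
  shows "del n \<sigma> permutes {1..n}"
proof -
  define \<tau> where "\<tau> = Transposition.transpose (Suc n) (\<sigma> (Suc n)) \<circ> \<sigma>"
  have s: "\<sigma> (Suc n) \<in> {1..Suc n}" using permutes_in_image[OF assms] by simp
  have sn: "Suc n \<in> {1..Suc n}" by simp
  have tp: "\<tau> permutes {1..Suc n}" unfolding \<tau>_def
    by (rule permutes_compose[OF assms permutes_swap_id[OF sn s]])
  have inj: "inj \<sigma>" by (rule permutes_inj[OF assms])
  have eq: "del n \<sigma> = \<tau>"
  proof
    fix i
    show "del n \<sigma> i = \<tau> i"
    proof (cases "i \<in> {1..n}")
      case True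
      then have ne: "i \<noteq> Suc n" by simp
      then have ne2: "\<sigma> i \<noteq> \<sigma> (Suc n)" using inj by (simp add: inj_eq)
      show ?thesis
      proof (cases "\<sigma> i = Suc n")
        case True
        then show ?thesis using \<open>i \<in> {1..n}\<close> unfolding del_def \<tau>_def by simp
      next
        case False
        then show ?thesis using \<open>i \<in> {1..n}\<close> ne2 unfolding del_def \<tau>_def by simp
      qed
    next
      case False
      show ?thesis
      proof (cases "i = Suc n")
        case True
        then show ?thesis using False unfolding del_def \<tau>_def by simp
      next
        case F2: False
        then have "i \<notin> {1..Suc n}" using False by auto
        then have si: "\<sigma> i = i" using permutes_not_in[OF assms] by blast
        have "i \<noteq> \<sigma> (Suc n)" using s \<open>i \<notin> {1..Suc n}\<close> by blast
        then show ?thesis using False F2 si unfolding del_def \<tau>_def by simp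
      qed
    qed
  qed
  have "\<tau> (Suc n) = Suc n" unfolding \<tau>_def by simp
  moreover have "{1..Suc n} - {1..n} = {Suc n}" by auto
  ultimately show ?thesis unfolding eq by (intro permutes_superset[OF tp]) simp
qed

lemma cyc1_c: "cycle_of id (1::nat) = {1}" unfolding cycle_of_def by simp
lemma cyc1_R: "{i \<in> {1..1::nat}. i = Min (cycle_of id i)} = {1}"
proof (rule set_eqI)
  fix x :: nat
  show "x \<in> {i \<in> {1..1::nat}. i = Min (cycle_of id i)} \<longleftrightarrow> x \<in> {1}"
  proof
    assume "x \<in> {i \<in> {1..1::nat}. i = Min (cycle_of id i)}"
    then have "x = 1" by simp
    then show "x \<in> {1}" by simp
  next
    assume "x \<in> {1}"
    then have "x = 1" by simp
    then show "x \<in> {i \<in> {1..1::nat}. i = Min (cycle_of id i)}" using cyc1_c by simp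
  qed
qed
lemma cyc_1: "cyc 1 id = [1]"
  unfolding cyc_def cyc1_R using cyc1_c by simp

lemma finite_A: "finite (A n \<pi>)"
proof -
  have "A n \<pi> \<subseteq> {\<sigma>. \<sigma> permutes {1..Suc n}}" unfolding A_def by auto
  then show ?thesis using finite_permutations[of "{1..Suc n}"] finite_subset by auto
qed

lemma pmf_map_del:
  assumes "set_pmf M \<subseteq> {\<sigma>. \<sigma> permutes {1..Suc n}}"
  shows "pmf (map_pmf (del n) M) \<pi> = sum (pmf M) (A n \<pi>)"
proof -
  have "pmf (map_pmf (del n) M) \<pi> = measure M (del n -` {\<pi>})" by (rule pmf_map)
  also have "\<dots> = measure M (del n -` {\<pi>} \<inter> set_pmf M)" by (rule measure_Int_set_pmf[symmetric])
  also have "del n -` {\<pi>} \<inter> set_pmf M = A n \<pi> \<inter> set_pmf M"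
    using assms unfolding A_def by auto
  also have "measure M \<dots> = measure M (A n \<pi>)" by (rule measure_Int_set_pmf)
  also have "\<dots> = sum (pmf M) (A n \<pi>)" by (rule measure_measure_pmf_finite[OF finite_A])
  finally show ?thesis .
qed

theorem theorem2:
  fixes p :: "nat \<Rightarrow> nat list \<Rightarrow> real"
  assumes nonneg: "\<And>n xs. n \<ge> 1 \<Longrightarrow> composition n xs \<Longrightarrow> p n xs \<ge> 0"
    and symm: "\<And>n xs ys. n \<ge> 1 \<Longrightarrow> composition n xs \<Longrightarrow> mset ys = mset xs \<Longrightarrow> p n ys = p n xs"
  shows "EPerPF p \<longleftrightarrow>
    (p 1 [1] = 1 \<and>
     (\<forall>n\<ge>1. \<forall>\<pi>. \<pi> permutes {1..n} \<longrightarrow>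
        p n (cyc n \<pi>) = (\<Sum>\<sigma>\<in>A n \<pi>. p (Suc n) (cyc (Suc n) \<sigma>))))"
proof
  assume "EPerPF p"
  then obtain P :: "nat \<Rightarrow> (nat \<Rightarrow> nat) pmf" where
    fe: "\<forall>n\<ge>1. fin_exchangeable n (P n)" and
    cons: "\<forall>n\<ge>1. map_pmf (del n) (P (Suc n)) = P n" and
    pm: "\<forall>n\<ge>1. \<forall>\<pi>. \<pi> permutes {1..n} \<longrightarrow> pmf (P n) \<pi> = p n (cyc n \<pi>)"
    unfolding EPerPF_def by blast
  have "fin_exchangeable 1 (P 1)" using fe by simp
  then have "set_pmf (P 1) \<subseteq> {\<pi>. \<pi> permutes {1..1}}" unfolding fin_exchangeable_def by (rule conjunct1)
  then have "set_pmf (P 1) \<subseteq> {id}" by auto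
  then have "P 1 = return_pmf id" by (simp add: set_pmf_subset_singleton)
  moreover have "pmf (P 1) id = p 1 (cyc 1 id)" using pm by (auto simp: permutes_id)
  ultimately have "p 1 (cyc 1 id) = 1" by simp
  then have one: "p 1 [1] = 1" unfolding cyc_1 .
  have rec: "p n (cyc n \<pi>) = (\<Sum>\<sigma>\<in>A n \<pi>. p (Suc n) (cyc (Suc n) \<sigma>))"
    if n: "n \<ge> 1" and pi: "\<pi> permutes {1..n}" for n \<pi>
  proof -
    have sp: "set_pmf (P (Suc n)) \<subseteq> {\<sigma>. \<sigma> permutes {1..Suc n}}"
      using fe unfolding fin_exchangeable_def by auto
    have "p n (cyc n \<pi>) = pmf (P n) \<pi>" using pm n pi by auto
    also have "\<dots> = pmf (map_pmf (del n) (P (Suc n))) \<pi>" using cons n by auto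
    also have "\<dots> = sum (pmf (P (Suc n))) (A n \<pi>)" by (rule pmf_map_del[OF sp])
    also have "\<dots> = (\<Sum>\<sigma>\<in>A n \<pi>. p (Suc n) (cyc (Suc n) \<sigma>))"
      by (rule sum.cong[OF refl]) (use pm in \<open>auto simp: A_def\<close>)
    finally show ?thesis .
  qed
  show "p 1 [1] = 1 \<and> (\<forall>n\<ge>1. \<forall>\<pi>. \<pi> permutes {1..n} \<longrightarrow>
        p n (cyc n \<pi>) = (\<Sum>\<sigma>\<in>A n \<pi>. p (Suc n) (cyc (Suc n) \<sigma>)))"
    using one rec by blast
next
  assume H: "p 1 [1] = 1 \<and> (\<forall>n\<ge>1. \<forall>\<pi>. \<pi> permutes {1..n} \<longrightarrow>
        p n (cyc n \<pi>) = (\<Sum>\<sigma>\<in>A n \<pi>. p (Suc n) (cyc (Suc n) \<sigma>)))"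
  then have one: "p 1 [1] = 1" and rec: "\<And>n \<pi>. n \<ge> 1 \<Longrightarrow> \<pi> permutes {1..n} \<Longrightarrow>
        p n (cyc n \<pi>) = (\<Sum>\<sigma>\<in>A n \<pi>. p (Suc n) (cyc (Suc n) \<sigma>))" by auto
  define f where "f n \<pi> = (if \<pi> permutes {1..n} then p n (cyc n \<pi>) else 0)" for n \<pi>
  define S where "S n = {\<pi>. \<pi> permutes {1..n::nat}}" for n
  have finS: "finite (S n)" for n unfolding S_def by (rule finite_permutations) simp
  have fnn: "f n \<pi> \<ge> 0" if "n \<ge> 1" for n \<pi>
    unfolding f_def using nonneg[OF that cyc_composition] by auto
  have sum1: "sum (f n) (S n) = 1" if "n \<ge> 1" for n
    using that
  proof (induct n rule: nat_induct_at_least)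
    case base
    have "S 1 = {id}" unfolding S_def by auto
    then have "sum (f 1) (S 1) = f 1 id" by simp
    also have "\<dots> = p 1 (cyc 1 id)" unfolding f_def using permutes_id[of "{1..1::nat}"] by simp
    also have "\<dots> = 1" unfolding cyc_1 by (rule one)
    finally show ?case .
  next
    case (Suc n)
    have img: "del n ` S (Suc n) \<subseteq> S n" unfolding S_def using del_permutes by auto
    have "sum (f (Suc n)) (S (Suc n)) =
      (\<Sum>\<pi>\<in>S n. sum (f (Suc n)) {\<sigma>. \<sigma> \<in> S (Suc n) \<and> del n \<sigma> = \<pi>})"
      by (rule sum.group[OF finS finS img, symmetric])
    also have "\<dots> = (\<Sum>\<pi>\<in>S n. (\<Sum>\<sigma>\<in>A n \<pi>. p (Suc n) (cyc (Suc n) \<sigma>)))"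
    proof (rule sum.cong[OF refl])
      fix \<pi> assume "\<pi> \<in> S n"
      have "{\<sigma>. \<sigma> \<in> S (Suc n) \<and> del n \<sigma> = \<pi>} = A n \<pi>" unfolding S_def A_def by auto
      moreover have "sum (f (Suc n)) (A n \<pi>) = (\<Sum>\<sigma>\<in>A n \<pi>. p (Suc n) (cyc (Suc n) \<sigma>))"
        by (rule sum.cong[OF refl]) (simp add: f_def A_def)
      ultimately show "sum (f (Suc n)) {\<sigma>. \<sigma> \<in> S (Suc n) \<and> del n \<sigma> = \<pi>} =
          (\<Sum>\<sigma>\<in>A n \<pi>. p (Suc n) (cyc (Suc n) \<sigma>))" by simp
    qed
    also have "\<dots> = sum (f n) (S n)"
      by (rule sum.cong[OF refl]) (use rec[OF Suc(1)] in \<open>auto simp: f_def S_def\<close>)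
    finally show ?case using Suc by simp
  qed
  have nn: "(\<integral>\<^sup>+x. ennreal (f n x) \<partial>count_space UNIV) = 1" if "n \<ge> 1" for n
  proof -
    have "(\<integral>\<^sup>+x. ennreal (f n x) \<partial>count_space UNIV) = (\<Sum>x\<in>S n. ennreal (f n x))"
      by (rule nn_integral_count_space'[OF finS]) (auto simp: f_def S_def)
    also have "\<dots> = ennreal (sum (f n) (S n))" using fnn[OF that] by simp
    finally show ?thesis using sum1[OF that] by simp
  qed
  define P where "P n = (if n \<ge> 1 then embed_pmf (f n) else return_pmf id)" for n
  have pmfP: "pmf (P n) \<pi> = f n \<pi>" if "n \<ge> 1" for n \<pi>
    unfolding P_def using that pmf_embed_pmf[OF fnn[OF that] nn[OF that]] by simp
  have setP: "set_pmf (P n) \<subseteq> S n" if n1: "n \<ge> 1" for n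
  proof
    fix x assume "x \<in> set_pmf (P n)"
    then have "f n x \<noteq> 0" using pmfP[OF n1] by (simp add: set_pmf_iff)
    then show "x \<in> S n" unfolding f_def S_def by (auto split: if_splits)
  qed
  show "EPerPF p"
    unfolding EPerPF_def
  proof (intro exI[of _ P] conjI allI impI)
    fix n :: nat assume n: "n \<ge> 1"
    show "fin_exchangeable n (P n)"
      unfolding fin_exchangeable_def
    proof (intro conjI allI impI)
      show "set_pmf (P n) \<subseteq> {\<pi>. \<pi> permutes {1..n}}" using setP[OF n] S_def by simp
      fix \<pi> \<tau> assume a: "\<pi> permutes {1..n}" "\<tau> permutes {1..n}" "mset (cyc n \<pi>) = mset (cyc n \<tau>)"
      show "pmf (P n) \<pi> = pmf (P n) \<tau>"
        using pmfP[OF n] a symm[OF n cyc_composition[OF a(2)] a(3)] unfolding f_def by simp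
    qed
  next
    fix n :: nat assume n: "n \<ge> 1"
    show "map_pmf (del n) (P (Suc n)) = P n"
    proof (rule pmf_eqI)
      fix \<pi>
      have sp: "set_pmf (P (Suc n)) \<subseteq> {\<sigma>. \<sigma> permutes {1..Suc n}}" using setP[of "Suc n"] S_def by simp
      have "pmf (map_pmf (del n) (P (Suc n))) \<pi> = sum (pmf (P (Suc n))) (A n \<pi>)"
        by (rule pmf_map_del[OF sp])
      also have "\<dots> = (\<Sum>\<sigma>\<in>A n \<pi>. p (Suc n) (cyc (Suc n) \<sigma>))"
        by (rule sum.cong[OF refl]) (use pmfP[of "Suc n"] in \<open>auto simp: A_def f_def\<close>)
      also have "\<dots> = f n \<pi>"
      proof (cases "\<pi> permutes {1..n}")
        case True
        then show ?thesis using rec[OF n True] unfolding f_def by simp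
      next
        case False
        then have "A n \<pi> = {}" unfolding A_def using del_permutes by auto
        then show ?thesis using False unfolding f_def by simp
      qed
      finally show "pmf (map_pmf (del n) (P (Suc n))) \<pi> = pmf (P n) \<pi>" using pmfP[OF n] by simp
    qed
  next
    fix n :: nat and \<pi> assume n: "n \<ge> 1" and pi: "\<pi> permutes {1..n}"
    show "pmf (P n) \<pi> = p n (cyc n \<pi>)"
      using pmfP[OF n] pi unfolding f_def by simp
  qed
qed

end
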